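(* Let $G$ be a finite simple graph and let $G_1,\dots,G_k$ be its connected components. Then $\alpha^*(G)\geq \sum_{i=1}^k \alpha^*(G_i)$. As a result, if $G$ has $k$ components, then $\alpha^*(G)\geq k$.
   Context: For a graph $H$, an independent set $I$ of $H$ is light if $\sum_{u\in I}d_H(u)\le |V(H)|-1$; $\alpha^*(H)$ is the maximum size of a light independent set of $H$. *)

theory Defs
  imports Main
begin

definition simple_graph :: "'a set \<Rightarrow> ('a \<Rightarrow> 'a \<Rightarrow> bool) \<Rightarrow> bool" where
  "simple_graph V E \<longleftrightarrow> finite V \<and> (\<forall>x y. E x y \<longrightarrow> x \<in> V \<and> y \<in> V)
     \<and> (\<forall>x y. E x y \<longrightarrow> E y x) \<and> (\<forall>x. \<not> E x x)"

definition degree :: "'a set \<Rightarrow> ('a \<Rightarrow> 'a \<Rightarrow> bool) \<Rightarrow> 'a \<Rightarrow> nat" where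
  "degree V E u = card {v \<in> V. E u v}"

definition independent_set :: "'a set \<Rightarrow> ('a \<Rightarrow> 'a \<Rightarrow> bool) \<Rightarrow> 'a set \<Rightarrow> bool" where
  "independent_set V E I \<longleftrightarrow> I \<subseteq> V \<and> (\<forall>x\<in>I. \<forall>y\<in>I. \<not> E x y)"

definition light_set :: "'a set \<Rightarrow> ('a \<Rightarrow> 'a \<Rightarrow> bool) \<Rightarrow> 'a set \<Rightarrow> bool" where
  "light_set V E I \<longleftrightarrow> independent_set V E I \<and>
     int (\<Sum>u\<in>I. degree V E u) \<le> int (card V) - 1"

definition alpha_star :: "'a set \<Rightarrow> ('a \<Rightarrow> 'a \<Rightarrow> bool) \<Rightarrow> nat" where
  "alpha_star V E = Max {card I | I. light_set V E I}"

definition induced :: "('a \<Rightarrow> 'a \<Rightarrow> bool) \<Rightarrow> 'a set \<Rightarrow> 'a \<Rightarrow> 'a \<Rightarrow> bool" where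
  "induced E C = (\<lambda>x y. E x y \<and> x \<in> C \<and> y \<in> C)"

definition components :: "'a set \<Rightarrow> ('a \<Rightarrow> 'a \<Rightarrow> bool) \<Rightarrow> 'a set set" where
  "components V E = {{w. E\<^sup>*\<^sup>* v w} | v. v \<in> V}"

end

theory Submission
  imports Defs
begin

lemma rtranclp_sym_aux:
  assumes "\<forall>x y. E x y \<longrightarrow> E y x" and "E\<^sup>*\<^sup>* a b"
  shows "E\<^sup>*\<^sup>* b a"
  using assms(2)
proof (induction rule: rtranclp_induct)
  case base then show ?case by simp
next
  case (step y z)
  then show ?case using assms(1) by (meson converse_rtranclp_into_rtranclp)
qed

lemma light_finite:
  assumes "finite V"
  shows "finite {card I | I. light_set V E I}"
proof -
  have "{card I | I. light_set V E I} \<subseteq> card ` Pow V"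
    by (auto simp: light_set_def independent_set_def)
  then show ?thesis using assms finite_subset by blast
qed

lemma light_le_alpha:
  assumes "finite V" "light_set V E I"
  shows "card I \<le> alpha_star V E"
  unfolding alpha_star_def using assms light_finite[OF assms(1), of E]
  by (intro Max_ge) auto

lemma empty_light:
  assumes "V \<noteq> {}" "finite V"
  shows "light_set V E {}"
  using assms by (auto simp: light_set_def independent_set_def card_gt_0_iff)

lemma alpha_attained:
  assumes "finite V" "V \<noteq> {}"
  shows "\<exists>I. light_set V E I \<and> card I = alpha_star V E"
proof -
  have ne: "{card I | I. light_set V E I} \<noteq> {}" using empty_light[OF assms(2,1)] by blast
  have "alpha_star V E \<in> {card I | I. light_set V E I}"
    unfolding alpha_star_def using Max_in[OF light_finite[OF assms(1)] ne] .
  then show ?thesis by auto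
qed

theorem lemma2p2:
  fixes V :: "'a set" and E :: "'a \<Rightarrow> 'a \<Rightarrow> bool"
  assumes "simple_graph V E" and "V \<noteq> {}"
  shows "(\<Sum>C\<in>components V E. alpha_star C (induced E C)) \<le> alpha_star V E
       \<and> card (components V E) \<le> alpha_star V E"
proof -
  let ?K = "components V E"
  have finV: "finite V" and inV: "\<And>x y. E x y \<Longrightarrow> x \<in> V \<and> y \<in> V"
    and sym: "\<forall>x y. E x y \<longrightarrow> E y x" and irr: "\<And>x. \<not> E x x"
    using assms(1) unfolding simple_graph_def by auto
  have finK: "finite ?K"
  proof -
    have "?K = (\<lambda>v. {w. E\<^sup>*\<^sup>* v w}) ` V" unfolding components_def by auto
    then show ?thesis using finV by simp
  qed
  have rt_in: "E\<^sup>*\<^sup>* v w \<Longrightarrow> v \<in> V \<Longrightarrow> w \<in> V" for v w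
    by (induction rule: rtranclp_induct) (auto dest: inV)
  have subV: "C \<subseteq> V" if "C \<in> ?K" for C
    using that rt_in unfolding components_def by auto
  have closed: "w \<in> C" if "C \<in> ?K" "u \<in> C" "E u w" for C u w
    using that unfolding components_def by (auto intro: rtranclp.rtrancl_into_rtrancl)
  have repr: "C = {w. E\<^sup>*\<^sup>* x w}" if CK: "C \<in> ?K" and xC: "x \<in> C" for C x
  proof -
    obtain v where v: "C = {w. E\<^sup>*\<^sup>* v w}" using CK unfolding components_def by blast
    then have vx: "E\<^sup>*\<^sup>* v x" using xC by auto
    have xv: "E\<^sup>*\<^sup>* x v" using rtranclp_sym_aux[OF sym vx] .
    show ?thesis using v vx xv by (auto intro: rtranclp_trans)
  qed
  have disj: "C1 \<inter> C2 = {}" if "C1 \<in> ?K" "C2 \<in> ?K" "C1 \<noteq> C2" for C1 C2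
    using repr that by blast
  have nonempty: "C \<noteq> {}" if "C \<in> ?K" for C
    using that unfolding components_def by auto
  have UK: "\<Union>?K = V"
    using subV unfolding components_def by blast
  have finC: "finite C" if "C \<in> ?K" for C using subV[OF that] finV finite_subset by blast
  have deg: "degree C (induced E C) u = degree V E u" if "C \<in> ?K" "u \<in> C" for C u
  proof -
    have "{v \<in> C. induced E C u v} = {v \<in> V. E u v}"
      using that closed subV unfolding induced_def by blast
    then show ?thesis unfolding degree_def by simp
  qed
  define f where "f C = (SOME I. light_set C (induced E C) I \<and> card I = alpha_star C (induced E C))" for C
  have fprop: "light_set C (induced E C) (f C) \<and> card (f C) = alpha_star C (induced E C)"
    if "C \<in> ?K" for C
    unfolding f_def using alpha_attained[OF finC[OF that] nonempty[OF that]] by (rule someI_ex)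
  have fsub: "f C \<subseteq> C" if "C \<in> ?K" for C
    using fprop[OF that] by (auto simp: light_set_def independent_set_def)
  have ffin: "finite (f C)" if "C \<in> ?K" for C using fsub[OF that] finC[OF that] finite_subset by blast
  have fdisj: "\<forall>i\<in>?K. \<forall>j\<in>?K. i \<noteq> j \<longrightarrow> f i \<inter> f j = {}"
    using fsub disj by blast
  define I where "I = \<Union>(f ` ?K)"
  have cardI: "card I = (\<Sum>C\<in>?K. alpha_star C (induced E C))"
    unfolding I_def using card_UN_disjoint[OF finK _ fdisj] ffin fprop by simp
  have indep: "independent_set V E I"
    unfolding independent_set_def
  proof
    show "I \<subseteq> V" unfolding I_def using fsub subV by blast
    show "\<forall>x\<in>I. \<forall>y\<in>I. \<not> E x y"
    proof (intro ballI notI)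
      fix x y assume x: "x \<in> I" and y: "y \<in> I" and e: "E x y"
      obtain C1 where C1: "C1 \<in> ?K" "x \<in> f C1" using x unfolding I_def by auto
      obtain C2 where C2: "C2 \<in> ?K" "y \<in> f C2" using y unfolding I_def by auto
      have "y \<in> C1" using closed[OF C1(1) _ e] fsub C1 by blast
      then have "C1 = C2" using disj C1 C2 fsub by blast
      then have "\<not> induced E C1 x y" using fprop[OF C1(1)] C1 C2
        by (auto simp: light_set_def independent_set_def)
      then show False using e C1 C2 \<open>y \<in> C1\<close> fsub unfolding induced_def by blast
    qed
  qed
  have degsum: "(\<Sum>u\<in>I. degree V E u) = (\<Sum>C\<in>?K. \<Sum>u\<in>f C. degree C (induced E C) u)"
  proof -
    have "(\<Sum>u\<in>I. degree V E u) = (\<Sum>C\<in>?K. \<Sum>u\<in>f C. degree V E u)"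
      unfolding I_def using sum.UNION_disjoint[OF finK _ fdisj] ffin by simp
    also have "\<dots> = (\<Sum>C\<in>?K. \<Sum>u\<in>f C. degree C (induced E C) u)"
      using deg fsub by (intro sum.cong refl) (metis subsetD)
    finally show ?thesis .
  qed
  have "int (\<Sum>u\<in>I. degree V E u) = (\<Sum>C\<in>?K. int (\<Sum>u\<in>f C. degree C (induced E C) u))"
    using degsum by simp
  also have "\<dots> \<le> (\<Sum>C\<in>?K. int (card C) - 1)"
    using fprop by (intro sum_mono) (auto simp: light_set_def)
  also have "\<dots> = int (\<Sum>C\<in>?K. card C) - int (card ?K)"
    by (simp add: sum_subtractf)
  also have "(\<Sum>C\<in>?K. card C) = card V"
    using card_Union_disjoint[of ?K] finC disj UK unfolding pairwise_def disjnt_def by auto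
  finally have sumle: "int (\<Sum>u\<in>I. degree V E u) \<le> int (card V) - int (card ?K)" .
  have K1: "card ?K \<ge> 1"
  proof -
    obtain v where "v \<in> V" using assms(2) by auto
    then have "{w. E\<^sup>*\<^sup>* v w} \<in> ?K" unfolding components_def by auto
    then have "?K \<noteq> {}" by auto
    then show ?thesis using finK by (simp add: Suc_leI card_gt_0_iff)
  qed
  have light: "light_set V E I"
    unfolding light_set_def using indep sumle K1 by linarith
  have part1: "(\<Sum>C\<in>?K. alpha_star C (induced E C)) \<le> alpha_star V E"
    using light_le_alpha[OF finV light] cardI by simp
  have one: "1 \<le> alpha_star C (induced E C)" if CK: "C \<in> ?K" for C
  proof -
    obtain v where v: "v \<in> C" using nonempty[OF CK] by auto
    have "{w \<in> C. induced E C v w} \<subseteq> C - {v}" using irr unfolding induced_def by auto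
    then have "degree C (induced E C) v \<le> card (C - {v})"
      unfolding degree_def using finC[OF CK] by (intro card_mono) auto
    also have "\<dots> = card C - 1" using v by simp
    finally have dle: "degree C (induced E C) v \<le> card C - 1" .
    have "card C > 0" using v finC[OF CK] card_gt_0_iff by blast
    then have "int (degree C (induced E C) v) \<le> int (card C) - 1" using dle by linarith
    then have "light_set C (induced E C) {v}"
      using v by (auto simp: light_set_def independent_set_def induced_def irr)
    from light_le_alpha[OF finC[OF CK] this] show ?thesis by simp
  qed
  have "card ?K \<le> (\<Sum>C\<in>?K. alpha_star C (induced E C))"
    using sum_mono[of ?K "\<lambda>_. 1::nat", OF one] by simp
  then show ?thesis using part1 by simp
qed

end
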